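(* Let $r\geq1$ be an integer. For $\boldsymbol\nu\in\mathbf N^r$ let $F_{\boldsymbol\nu}(\rho,\boldsymbol T)=\sum_{\boldsymbol n\in\mathbf N^r}\rho^{\min_i(n_i+\nu_i)}\prod_iT_i^{n_i}\in\mathbf Z[[\rho,T_1,\dots,T_r]]$ and $\widetilde F_{\boldsymbol\nu}(\rho,\boldsymbol T)=(1-\rho\prod_iT_i)\prod_i(1-T_i)\,F_{\boldsymbol\nu}(\rho,\boldsymbol T)$. Then: (1) Let $\boldsymbol n\in\mathbf N^r$, $m=\min_i(n_i+\nu_i)$, $I_1=\{i:n_i\geq1\}$, $I_2=\{i:n_i\geq2\}$, $K=\{i\in I_1:n_i+\nu_i\geq m+1\}$. If $I_1\neq\{1,\dots,r\}$, the coefficient of $\prod T_i^{n_i}$ in $\widetilde F_{\boldsymbol\nu}$ equals $\rho^m$ if $I_1=\varnothing$; $\rho^m-\rho^{m-1}$ if $I_1\neq\varnothing$ and $K=\varnothing$; $0$ if $K\neq\varnothing$. If $I_1=\{1,\dots,r\}$, it equals $0$ if $I_2\cap K\neq\varnothing$; $-\rho^m$ if $I_2=\varnothing$ and $K\neq\varnothing$; $0$ if $I_2\neq\varnothing$ and $K=\varnothing$; $\rho^{m-1}-\rho^m$ if $I_2\neq\varnothing$, $K\neq\varnothing$ and $I_2\cap K=\varnothing$; $-\rho^{m-1}$ if $I_2=K=\varnothing$. In particular $\widetilde F_{(0,\dots,0)}(\rho,\boldsymbol T)=1-\prod_iT_i$. (2) $\widetilde F_{\boldsymbol\nu}(\rho,\boldsymbol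 T)$ is a polynomial whose partial degree in each $T_i$ is at most $\max_j\nu_j+1$. (3) Let $\rho\geq1$, $\varepsilon>0$ and $\eta_1,\dots,\eta_r$ complex numbers of modulus $1$. Then for every $\boldsymbol\nu$, $$\big|\widetilde F_{\boldsymbol\nu}\big(\rho,(\eta_i\rho^{-1})_i\big)\big|\leq\big(2+\max_i\nu_i-\min_i\nu_i\big)^r\rho^{\min_i\nu_i}.$$ *)

theory Defs
  imports "HOL-Analysis.Analysis" "HOL-Computational_Algebra.Polynomial"
begin

definition vecs :: "nat \<Rightarrow> (nat \<Rightarrow> nat) set" where
  "vecs r = {n. \<forall>i\<ge>r. n i = 0}"

text \<open>Formal power series in T_0,...,T_(r-1) with coefficients in a ring 'a,
  given by their coefficient function on exponent vectors (only vectors in vecs r matter).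
  Coefficients will be taken in int poly (the variable of int poly is rho), so that
  Z[rho][[T]] is a subring of Z[[rho,T]].\<close>
definition mps_mult :: "nat \<Rightarrow> ((nat \<Rightarrow> nat) \<Rightarrow> 'a::comm_ring_1)
    \<Rightarrow> ((nat \<Rightarrow> nat) \<Rightarrow> 'a) \<Rightarrow> (nat \<Rightarrow> nat) \<Rightarrow> 'a" where
  "mps_mult r f g n = (\<Sum>k\<in>{k\<in>vecs r. \<forall>i. k i \<le> n i}. f k * g (\<lambda>i. n i - k i))"

definition unitvec :: "nat \<Rightarrow> nat \<Rightarrow> nat" where
  "unitvec i = (\<lambda>j. if j = i then 1 else 0)"

definition onesvec :: "nat \<Rightarrow> nat \<Rightarrow> nat" where
  "onesvec r = (\<lambda>j. if j < r then 1 else 0)"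

definition one_minus_T :: "nat \<Rightarrow> (nat \<Rightarrow> nat) \<Rightarrow> int poly" where
  "one_minus_T i n = (if n = (\<lambda>_. 0) then 1 else if n = unitvec i then -1 else 0)"

definition one_minus_rhoT :: "nat \<Rightarrow> (nat \<Rightarrow> nat) \<Rightarrow> int poly" where
  "one_minus_rhoT r n = (if n = (\<lambda>_. 0) then 1 else if n = onesvec r then - [:0, 1:] else 0)"

definition F :: "nat \<Rightarrow> (nat \<Rightarrow> nat) \<Rightarrow> (nat \<Rightarrow> nat) \<Rightarrow> int poly" where
  "F r \<nu> n = (if n \<in> vecs r then monom 1 (Min ((\<lambda>i. n i + \<nu> i) ` {..<r})) else 0)"

definition Ftilde :: "nat \<Rightarrow> (nat \<Rightarrow> nat) \<Rightarrow> (nat \<Rightarrow> nat) \<Rightarrow> int poly" where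
  "Ftilde r \<nu> = mps_mult r (one_minus_rhoT r)
      (foldr (\<lambda>i acc. mps_mult r (one_minus_T i) acc) [0..<r] (F r \<nu>))"

definition Ftilde_eval :: "nat \<Rightarrow> (nat \<Rightarrow> nat) \<Rightarrow> real \<Rightarrow> (nat \<Rightarrow> complex) \<Rightarrow> complex" where
  "Ftilde_eval r \<nu> \<rho> t =
     (\<Sum>n\<in>{n\<in>vecs r. Ftilde r \<nu> n \<noteq> 0}.
        poly (map_poly of_int (Ftilde r \<nu> n)) (complex_of_real \<rho>) * (\<Prod>i<r. t i ^ n i))"

end

theory Submission
  imports Defs
begin


lemma fin_sub: "finite {k\<in>vecs r. \<forall>i. k i \<le> n i}"
proof -
  have "{k\<in>vecs r. \<forall>i. k i \<le> n i} \<subseteq> (\<lambda>f i. if i<r then f i else 0) ` PiE {..<r} (\<lambda>i. {..n i})"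
  proof
    fix k assume k: "k \<in> {k\<in>vecs r. \<forall>i. k i \<le> n i}"
    have "k = (\<lambda>i. if i<r then restrict k {..<r} i else 0)"
      using k by (auto simp: vecs_def)
    moreover have "restrict k {..<r} \<in> PiE {..<r} (\<lambda>i. {..n i})" using k by auto
    ultimately show "k \<in> (\<lambda>f i. if i<r then f i else 0) ` PiE {..<r} (\<lambda>i. {..n i})" by blast
  qed
  thus ?thesis by (rule finite_subset) (auto intro: finite_PiE)
qed

lemma mult_T:
  assumes "i < r" "n \<in> vecs r"
  shows "mps_mult r (one_minus_T i) g n = g n - (if 1 \<le> n i then g (n(i := n i - 1)) else 0)"
proof -
  let ?S = "{k\<in>vecs r. \<forall>i. k i \<le> n i}"
  have z: "(\<lambda>_. 0::nat) \<noteq> unitvec i" by (auto simp: unitvec_def fun_eq_iff)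
  have e: "\<And>k. one_minus_T i k * g (\<lambda>j. n j - k j) =
     (if k = (\<lambda>_. 0) then g n else 0) + (if k = unitvec i then - g (n(i := n i - 1)) else 0)"
    using z by (auto simp: one_minus_T_def unitvec_def fun_eq_iff intro!: arg_cong[where f=g])
  have "mps_mult r (one_minus_T i) g n = (\<Sum>k\<in>?S. (if k = (\<lambda>_. 0) then g n else 0)) +
     (\<Sum>k\<in>?S. (if k = unitvec i then - g (n(i := n i - 1)) else 0))"
    unfolding mps_mult_def e by (simp add: sum.distrib)
  also have "\<dots> = g n - (if 1 \<le> n i then g (n(i := n i - 1)) else 0)"
    using assms fin_sub[of r n] by (auto simp: vecs_def unitvec_def)
  finally show ?thesis .
qed

lemma mult_rhoT:
  assumes "1 \<le> r" "n \<in> vecs r"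
  shows "mps_mult r (one_minus_rhoT r) g n = g n - (if \<forall>i<r. 1 \<le> n i then [:0,1:] * g (\<lambda>j. n j - onesvec r j) else 0)"
proof -
  let ?S = "{k\<in>vecs r. \<forall>i. k i \<le> n i}"
  have z: "(\<lambda>_. 0::nat) \<noteq> onesvec r"
  proof
    assume "(\<lambda>_. 0::nat) = onesvec r"
    hence "onesvec r 0 = 0" by metis
    with assms show False by (simp add: onesvec_def)
  qed
  have e: "\<And>k. one_minus_rhoT r k * g (\<lambda>j. n j - k j) =
     (if k = (\<lambda>_. 0) then g n else 0) + (if k = onesvec r then - [:0,1:] * g (\<lambda>j. n j - onesvec r j) else 0)"
    using z by (auto simp: one_minus_rhoT_def)
  have "mps_mult r (one_minus_rhoT r) g n = (\<Sum>k\<in>?S. (if k = (\<lambda>_. 0) then g n else 0)) +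
     (\<Sum>k\<in>?S. (if k = onesvec r then - [:0,1:] * g (\<lambda>j. n j - onesvec r j) else 0))"
    unfolding mps_mult_def e by (simp add: sum.distrib)
  also have "\<dots> = g n - (if \<forall>i<r. 1 \<le> n i then [:0,1:] * g (\<lambda>j. n j - onesvec r j) else 0)"
    using assms fin_sub[of r n] by (auto simp: vecs_def onesvec_def)
  finally show ?thesis .
qed

definition C :: "nat \<Rightarrow> (nat\<Rightarrow>nat) \<Rightarrow> nat set \<Rightarrow> (nat\<Rightarrow>nat) \<Rightarrow> int poly" where
"C r \<nu> L n = (let m = Min ((\<lambda>i. n i + \<nu> i) ` {..<r}); A = {i\<in>L. 1 \<le> n i} in
   if A = {} then monom 1 m else if (\<forall>j\<in>A. n j + \<nu> j = m) then monom 1 m - monom 1 (m-1) else 0)"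

lemma min_dec:
  fixes \<nu> :: "nat \<Rightarrow> nat"
  assumes "i<r" "1 \<le> n i"
  defines "m \<equiv> Min ((\<lambda>j. n j + \<nu> j) ` {..<r})"
  shows "Min ((\<lambda>j. (n(i:=n i - 1)) j + \<nu> j) ` {..<r}) = (if n i + \<nu> i = m then m - 1 else m)"
    (is "?m' = _")
proof -
  have ne: "{..<r} \<noteq> {}" using assms by auto
  have mle: "\<And>j. j < r \<Longrightarrow> m \<le> n j + \<nu> j" unfolding m_def by (intro Min_le) auto
  have "m \<in> (\<lambda>j. n j + \<nu> j) ` {..<r}" unfolding m_def using ne by (intro Min_in) auto
  then obtain j0 where j0: "j0 < r" "m = n j0 + \<nu> j0" by auto
  have m'le: "\<And>j. j < r \<Longrightarrow> ?m' \<le> (n(i:=n i - 1)) j + \<nu> j" by (intro Min_le) auto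
  have pt1: "\<And>j. j < r \<Longrightarrow> m - 1 \<le> (n(i:=n i - 1)) j + \<nu> j"
  proof -
    fix j assume "j < r" thus "m - 1 \<le> (n(i:=n i - 1)) j + \<nu> j"
      using mle[of j] assms(2) by (cases "j = i") auto
  qed
  have ge1: "m - 1 \<le> ?m'" using ne pt1 by (simp add: Min_ge_iff)
  show ?thesis
  proof (cases "n i + \<nu> i = m")
    case True
    have "?m' \<le> m - 1" using m'le[OF assms(1)] True assms(2) by simp
    thus ?thesis using True ge1 by simp
  next
    case False
    have pt2: "\<And>j. j < r \<Longrightarrow> m \<le> (n(i:=n i - 1)) j + \<nu> j"
    proof -
      fix j assume "j < r" thus "m \<le> (n(i:=n i - 1)) j + \<nu> j"
        using mle[of j] mle[OF assms(1)] assms(2) False by (cases "j = i") auto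
    qed
    have "m \<le> ?m'" using ne pt2 by (simp add: Min_ge_iff)
    moreover have "j0 \<noteq> i" using j0 False by auto
    hence "?m' \<le> m" using m'le[OF j0(1)] j0 by simp
    ultimately show ?thesis using False by simp
  qed
qed

lemma G_closed:
  assumes r1: "1 \<le> r"
  shows "distinct L \<Longrightarrow> set L \<subseteq> {..<r} \<Longrightarrow> n \<in> vecs r \<Longrightarrow>
    foldr (\<lambda>i acc. mps_mult r (one_minus_T i) acc) L (F r \<nu>) n = C r \<nu> (set L) n"
proof (induction L arbitrary: n)
  case Nil
  thus ?case by (simp add: F_def C_def)
next
  case (Cons i L)
  let ?H = "foldr (\<lambda>i acc. mps_mult r (one_minus_T i) acc) L (F r \<nu>)"
  have ir: "i < r" and iL: "i \<notin> set L" and dL: "distinct L" and sL: "set L \<subseteq> {..<r}"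
    using Cons.prems by auto
  define n' where "n' = n(i := n i - 1)"
  have n'v: "n' \<in> vecs r" using Cons.prems(3) ir by (auto simp: vecs_def n'_def)
  define m where "m = Min ((\<lambda>j. n j + \<nu> j) ` {..<r})"
  define A where "A = {j\<in>set L. 1 \<le> n j}"
  have A': "{j\<in>set L. 1 \<le> n' j} = A" using iL by (auto simp: A_def n'_def)
  have eq': "\<And>j. j \<in> A \<Longrightarrow> n' j = n j" using iL by (auto simp: A_def n'_def)
  have mle: "\<And>j. j < r \<Longrightarrow> m \<le> n j + \<nu> j" unfolding m_def by (intro Min_le) auto
  have lhs: "foldr (\<lambda>i acc. mps_mult r (one_minus_T i) acc) (i # L) (F r \<nu>) n
      = C r \<nu> (set L) n - (if 1 \<le> n i then C r \<nu> (set L) n' else 0)"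
  proof -
    have "foldr (\<lambda>i acc. mps_mult r (one_minus_T i) acc) (i # L) (F r \<nu>) n
      = ?H n - (if 1 \<le> n i then ?H n' else 0)"
      unfolding n'_def by (simp add: mult_T[OF ir Cons.prems(3)])
    thus ?thesis using Cons.IH[OF dL sL Cons.prems(3)] Cons.IH[OF dL sL n'v] by simp
  qed
  show ?case
  proof (cases "1 \<le> n i")
    case False
    have "{j\<in>set (i#L). 1 \<le> n j} = A" using False by (auto simp: A_def)
    thus ?thesis using lhs False by (simp add: C_def A_def)
  next
    case True
    have An: "{j\<in>set (i#L). 1 \<le> n j} = insert i A" using True by (auto simp: A_def)
    have mm: "Min ((\<lambda>j. n' j + \<nu> j) ` {..<r}) = (if n i + \<nu> i = m then m - 1 else m)"
      unfolding n'_def m_def by (rule min_dec[of i r n, OF ir True])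
    have Cn: "C r \<nu> (set L) n = (if A = {} then monom 1 m else if (\<forall>j\<in>A. n j + \<nu> j = m) then monom 1 m - monom 1 (m-1) else 0)"
      by (simp only: C_def Let_def A_def[symmetric] m_def[symmetric])
    have Cn': "C r \<nu> (set L) n' = (let m' = (if n i + \<nu> i = m then m - 1 else m) in
       if A = {} then monom 1 m' else if (\<forall>j\<in>A. n j + \<nu> j = m') then monom 1 m' - monom 1 (m'-1) else 0)"
      unfolding C_def Let_def mm A' using eq' by (simp cong: ball_cong)
    have Cnew: "C r \<nu> (set (i#L)) n = (if (\<forall>j\<in>insert i A. n j + \<nu> j = m) then monom 1 m - monom 1 (m-1) else 0)"
      unfolding C_def Let_def An by (simp add: m_def)
    show ?thesis
    proof (cases "n i + \<nu> i = m")
      case T2: True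
      have m1: "1 \<le> m" using T2 True by simp
      show ?thesis
      proof (cases "A = {}")
        case True
        thus ?thesis using lhs Cn Cn' Cnew T2 \<open>1 \<le> n i\<close> by simp
      next
        case False
        from False obtain j where jA: "j \<in> A" by auto
        hence "j < r" using sL by (auto simp: A_def)
        hence "n j + \<nu> j \<noteq> m - 1" using mle[of j] m1 by linarith
        hence "(\<forall>j\<in>A. n j + \<nu> j = m - 1) = False" using jA by blast
        hence nall: "(\<forall>j\<in>A. n j + \<nu> j = m - 1) = False" .
        have Ane: "(A = {}) = False" using False by simp
        have "C r \<nu> (set L) n' = 0"
          by (simp only: Cn' Let_def T2 simp_thms if_True if_False Ane nall)
        thus ?thesis using lhs Cn Cnew T2 \<open>1 \<le> n i\<close> False by simp
      qed
    next
      case F2: False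
      have "C r \<nu> (set L) n' = C r \<nu> (set L) n" using Cn Cn' F2 by (simp add: Let_def)
      thus ?thesis using lhs Cnew \<open>1 \<le> n i\<close> F2 by simp
    qed
  qed
qed


lemma Xm: "[:0,1:] * monom (1::int) k = monom 1 (Suc k)" by (simp add: monom_Suc)

lemma Ftilde_eq:
  assumes r1: "1 \<le> r" and nv: "n \<in> vecs r"
  shows "Ftilde r \<nu> n = C r \<nu> {..<r} n - (if \<forall>i<r. 1 \<le> n i then [:0,1:] * C r \<nu> {..<r} (\<lambda>j. n j - onesvec r j) else 0)"
proof -
  have nv': "(\<lambda>j. n j - onesvec r j) \<in> vecs r" using nv by (auto simp: vecs_def)
  show ?thesis unfolding Ftilde_def mult_rhoT[OF r1 nv]
    using G_closed[OF r1, of "[0..<r]" n \<nu>] G_closed[OF r1, of "[0..<r]" "(\<lambda>j. n j - onesvec r j)" \<nu>] nv nv'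
    by (auto simp: lessThan_atLeast0)
qed
lemma part1:
  fixes \<nu> n :: "nat \<Rightarrow> nat"
  assumes r1: "1 \<le> r" and nv: "n \<in> vecs r"
  defines "m \<equiv> Min ((\<lambda>i. n i + \<nu> i) ` {..<r})"
  defines "I1 \<equiv> {i. i < r \<and> n i \<ge> 1}"
  defines "I2 \<equiv> {i. i < r \<and> n i \<ge> 2}"
  defines "K \<equiv> {i \<in> I1. n i + \<nu> i \<ge> m + 1}"
  defines "c \<equiv> Ftilde r \<nu> n"
  shows "(I1 \<noteq> {..<r} \<longrightarrow>
             (I1 = {} \<longrightarrow> c = monom 1 m) \<and>
             (I1 \<noteq> {} \<and> K = {} \<longrightarrow> c = monom 1 m - monom 1 (m - 1)) \<and>
             (K \<noteq> {} \<longrightarrow> c = 0)) \<and>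
          (I1 = {..<r} \<longrightarrow>
             (I2 \<inter> K \<noteq> {} \<longrightarrow> c = 0) \<and>
             (I2 = {} \<and> K \<noteq> {} \<longrightarrow> c = - monom 1 m) \<and>
             (I2 \<noteq> {} \<and> K = {} \<longrightarrow> c = 0) \<and>
             (I2 \<noteq> {} \<and> K \<noteq> {} \<and> I2 \<inter> K = {} \<longrightarrow> c = monom 1 (m - 1) - monom 1 m) \<and>
             (I2 = {} \<and> K = {} \<longrightarrow> c = - monom 1 (m - 1)))"
proof -
  have mle: "\<And>j. j < r \<Longrightarrow> m \<le> n j + \<nu> j" unfolding m_def by (intro Min_le) auto
  have Kc: "K = {} \<longleftrightarrow> (\<forall>j\<in>I1. n j + \<nu> j = m)"
    using mle by (auto simp: K_def I1_def) (meson le_antisym not_less_eq_eq)+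
  have Cn: "C r \<nu> {..<r} n = (if I1 = {} then monom 1 m else if K = {} then monom 1 m - monom 1 (m-1) else 0)"
  proof -
    have "{i\<in>{..<r}. 1 \<le> n i} = I1" by (auto simp: I1_def)
    thus ?thesis unfolding C_def Let_def m_def[symmetric] Kc by simp
  qed
  show ?thesis
  proof (cases "I1 = {..<r}")
    case False
    hence "\<not> (\<forall>i<r. 1 \<le> n i)" by (auto simp: I1_def)
    hence c: "c = C r \<nu> {..<r} n" unfolding c_def using Ftilde_eq[OF r1 nv] by auto
    have KI: "K \<subseteq> I1" by (auto simp: K_def)
    show ?thesis using False KI unfolding c Cn by auto
  next
    case True
    hence all: "\<forall>i<r. 1 \<le> n i" by (auto simp: I1_def)
    hence c: "c = C r \<nu> {..<r} n - [:0,1:] * C r \<nu> {..<r} (\<lambda>j. n j - onesvec r j)"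
      unfolding c_def using Ftilde_eq[OF r1 nv] by auto
    have I1ne: "I1 \<noteq> {}" using True r1 by (metis lessThan_iff less_le_trans empty_iff zero_less_one)
    have "m \<in> (\<lambda>i. n i + \<nu> i) ` {..<r}" unfolding m_def using r1 by (intro Min_in) (auto simp: lessThan_empty_iff)
    hence m1: "1 \<le> m" using all by auto
    define n'' where "n'' = (\<lambda>j. n j - onesvec r j)"
    have mm: "Min ((\<lambda>i. n'' i + \<nu> i) ` {..<r}) = m - 1"
    proof -
      have "Min ((\<lambda>i. n'' i + \<nu> i) ` {..<r}) = Min ((\<lambda>x. x - 1) ` ((\<lambda>i. n i + \<nu> i) ` {..<r}))"
        unfolding image_image using all by (intro arg_cong[where f=Min] image_cong) (auto simp: n''_def onesvec_def)
      also have "\<dots> = m - 1" unfolding m_def using r1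
        by (intro mono_Min_commute[symmetric]) (auto simp: mono_def lessThan_empty_iff)
      finally show ?thesis .
    qed
    have A2: "{i\<in>{..<r}. 1 \<le> n'' i} = I2" by (auto simp: I2_def n''_def onesvec_def)
    have K2: "(\<forall>j\<in>I2. n'' j + \<nu> j = m - 1) \<longleftrightarrow> I2 \<inter> K = {}"
    proof -
      have "\<And>j. j \<in> I2 \<Longrightarrow> (n'' j + \<nu> j = m - 1) \<longleftrightarrow> j \<notin> K"
      proof -
        fix j assume j: "j \<in> I2"
        hence "j < r" "2 \<le> n j" by (auto simp: I2_def)
        thus "(n'' j + \<nu> j = m - 1) \<longleftrightarrow> j \<notin> K" using mle[of j] m1
          by (auto simp: n''_def onesvec_def K_def I1_def)
      qed
      thus ?thesis by blast
    qed
    have Cn'': "C r \<nu> {..<r} n'' = (if I2 = {} then monom 1 (m - 1) else if I2 \<inter> K = {} then monom 1 (m - 1) - monom 1 (m - 1 - 1) else 0)"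
      unfolding C_def Let_def mm A2 K2 by simp
    have m2: "I2 \<noteq> {} \<Longrightarrow> I2 \<inter> K = {} \<Longrightarrow> 2 \<le> m"
    proof -
      assume "I2 \<noteq> {}" "I2 \<inter> K = {}"
      then obtain j where "j \<in> I2" "j \<notin> K" by auto
      thus "2 \<le> m" using mle[of j] by (auto simp: I2_def K_def I1_def)
    qed
    have sm: "Suc (m - 1) = m" using m1 by simp
    have e1: "[:0,1:] * monom 1 (m - 1) = monom (1::int) m" using Xm[of "m - 1"] unfolding sm .
    have e2: "I2 \<noteq> {} \<Longrightarrow> I2 \<inter> K = {} \<Longrightarrow> [:0,1:] * monom 1 (m - 1 - 1) = monom (1::int) (m - 1)"
    proof -
      assume a: "I2 \<noteq> {}" "I2 \<inter> K = {}"
      have sm2: "Suc (m - 1 - 1) = m - 1" using m2[OF a] by simp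
      show "[:0,1:] * monom 1 (m - 1 - 1) = monom (1::int) (m - 1)" using Xm[of "m - 1 - 1"] unfolding sm2 .
    qed
    have c2: "c = (if K = {} then monom 1 m - monom 1 (m-1) else 0) - [:0,1:] *
       (if I2 = {} then monom 1 (m - 1) else if I2 \<inter> K = {} then monom 1 (m - 1) - monom 1 (m - 1 - 1) else 0)"
      unfolding c n''_def[symmetric] Cn Cn'' using I1ne by simp
    have s1: "I2 \<inter> K \<noteq> {} \<longrightarrow> c = 0"
    proof
      assume a: "I2 \<inter> K \<noteq> {}"
      hence "K \<noteq> {}" "I2 \<noteq> {}" by auto
      thus "c = 0" using a unfolding c2 by simp
    qed
    have s2: "I2 = {} \<and> K \<noteq> {} \<longrightarrow> c = - monom 1 m"
      unfolding c2 using e1 by simp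
    have s3: "I2 \<noteq> {} \<and> K = {} \<longrightarrow> c = 0"
    proof
      assume a: "I2 \<noteq> {} \<and> K = {}"
      hence "I2 \<inter> K = {}" by simp
      thus "c = 0" using a e1 e2[OF conjunct1[OF a]] unfolding c2 by (simp add: ring_distribs)
    qed
    have s4: "I2 \<noteq> {} \<and> K \<noteq> {} \<and> I2 \<inter> K = {} \<longrightarrow> c = monom 1 (m - 1) - monom 1 m"
    proof
      assume a: "I2 \<noteq> {} \<and> K \<noteq> {} \<and> I2 \<inter> K = {}"
      thus "c = monom 1 (m - 1) - monom 1 m" using e1 e2 unfolding c2 by (simp add: ring_distribs)
    qed
    have s5: "I2 = {} \<and> K = {} \<longrightarrow> c = - monom 1 (m - 1)"
      unfolding c2 using e1 by (simp add: ring_distribs)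
    show ?thesis using True s1 s2 s3 s4 s5 by blast
  qed
qed



lemma map_poly_of_int_diff: "map_poly (of_int::int\<Rightarrow>complex) (p - q) = map_poly of_int p - map_poly of_int q"
  by (rule poly_eqI) (simp add: coeff_map_poly)
lemma map_poly_of_int_uminus: "map_poly (of_int::int\<Rightarrow>complex) (- p) = - map_poly of_int p"
  by (rule poly_eqI) (simp add: coeff_map_poly)

lemma ev_monom: "poly (map_poly (of_int::int\<Rightarrow>complex) (monom 1 k)) (complex_of_real \<rho>) = complex_of_real (\<rho> ^ k)"
  by (simp add: map_poly_monom poly_monom)

lemma coef_set_bound:
  assumes "c \<in> {monom 1 m, monom 1 m - monom 1 (m-1), 0, -monom 1 m, monom 1 (m-1) - monom 1 m, -monom 1 (m-1)}"
    and rho: "(\<rho>::real) \<ge> 1"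
  shows "cmod (poly (map_poly of_int c) (complex_of_real \<rho>)) \<le> \<rho> ^ m"
proof -
  have p1: "\<rho> ^ (m - 1) \<le> \<rho> ^ m" using rho by (intro power_increasing) auto
  have p0: "0 \<le> \<rho> ^ (m - 1)" "0 \<le> \<rho> ^ m" using rho by auto
  have d: "\<bar>\<rho> ^ m - \<rho> ^ (m - 1)\<bar> \<le> \<rho> ^ m" using p0 p1 by linarith
  have d2: "\<bar>\<rho> ^ (m-1) - \<rho> ^ m\<bar> \<le> \<rho> ^ m" using p0 p1 by linarith
  show ?thesis using assms(1) d d2 p0 p1
    by (auto simp: map_poly_of_int_diff map_poly_of_int_uminus ev_monom
        simp del: of_real_power of_real_diff simp flip: of_real_diff)
qed

lemma coef_in_set:
  fixes \<nu> n :: "nat \<Rightarrow> nat"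
  assumes r1: "1 \<le> r" and nv: "n \<in> vecs r"
  defines "m \<equiv> Min ((\<lambda>i. n i + \<nu> i) ` {..<r})"
  shows "Ftilde r \<nu> n \<in> {monom 1 m, monom 1 m - monom 1 (m-1), 0, -monom 1 m, monom 1 (m-1) - monom 1 m, -monom 1 (m-1)}"
proof -
  define I1 where "I1 \<equiv> {i. i < r \<and> n i \<ge> 1}"
  define I2 where "I2 \<equiv> {i. i < r \<and> n i \<ge> 2}"
  define K where "K \<equiv> {i \<in> I1. n i + \<nu> i \<ge> m + 1}"
  define c where "c \<equiv> Ftilde r \<nu> n"
  note P = part1[OF r1 nv, where \<nu>=\<nu>, folded m_def c_def, folded I1_def I2_def, folded K_def]
  have "c \<in> {monom 1 m, monom 1 m - monom 1 (m-1), 0, -monom 1 m, monom 1 (m-1) - monom 1 m, -monom 1 (m-1)}"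
  proof (cases "I1 = {..<r}")
    case False
    have Q: "(I1 = {} \<longrightarrow> c = monom 1 m) \<and>
             (I1 \<noteq> {} \<and> K = {} \<longrightarrow> c = monom 1 m - monom 1 (m - 1)) \<and>
             (K \<noteq> {} \<longrightarrow> c = 0)" using P False by blast
    thus ?thesis by (cases "I1 = {}"; cases "K = {}") simp_all
  next
    case True
    have Q: "(I2 \<inter> K \<noteq> {} \<longrightarrow> c = 0) \<and>
             (I2 = {} \<and> K \<noteq> {} \<longrightarrow> c = - monom 1 m) \<and>
             (I2 \<noteq> {} \<and> K = {} \<longrightarrow> c = 0) \<and>
             (I2 \<noteq> {} \<and> K \<noteq> {} \<and> I2 \<inter> K = {} \<longrightarrow> c = monom 1 (m - 1) - monom 1 m) \<and>
             (I2 = {} \<and> K = {} \<longrightarrow> c = - monom 1 (m - 1))" using P True by blast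
    thus ?thesis by (cases "I2 = {}"; cases "K = {}"; cases "I2 \<inter> K = {}") simp_all
  qed
  thus ?thesis by (simp add: c_def)
qed

lemma box:
  fixes \<nu> n :: "nat \<Rightarrow> nat"
  assumes r1: "1 \<le> r" and nv: "n \<in> vecs r"
    and nz: "Ftilde r \<nu> n \<noteq> 0" and ir: "i < r"
  shows "n i \<le> Max (\<nu> ` {..<r}) - Min (\<nu> ` {..<r}) + 1"
proof -
  define m where "m \<equiv> Min ((\<lambda>i. n i + \<nu> i) ` {..<r})"
  define I1 where "I1 \<equiv> {i. i < r \<and> n i \<ge> 1}"
  define I2 where "I2 \<equiv> {i. i < r \<and> n i \<ge> 2}"
  define K where "K \<equiv> {i \<in> I1. n i + \<nu> i \<ge> m + 1}"
  define c where "c \<equiv> Ftilde r \<nu> n"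
  note P = part1[OF r1 nv, where \<nu>=\<nu>, folded m_def c_def, folded I1_def I2_def, folded K_def]
  have mle: "\<And>j. j < r \<Longrightarrow> m \<le> n j + \<nu> j" unfolding m_def by (intro Min_le) auto
  have min_in: "m \<in> (\<lambda>i. n i + \<nu> i) ` {..<r}" unfolding m_def using r1 by (intro Min_in) (auto simp: lessThan_empty_iff)
  have Q1: "I1 \<noteq> {..<r} \<Longrightarrow> (I1 = {} \<longrightarrow> c = monom 1 m) \<and>
             (I1 \<noteq> {} \<and> K = {} \<longrightarrow> c = monom 1 m - monom 1 (m - 1)) \<and>
             (K \<noteq> {} \<longrightarrow> c = 0)" using P by blast
  have Q2: "I1 = {..<r} \<Longrightarrow> (I2 \<inter> K \<noteq> {} \<longrightarrow> c = 0) \<and>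
             (I2 = {} \<and> K \<noteq> {} \<longrightarrow> c = - monom 1 m) \<and>
             (I2 \<noteq> {} \<and> K = {} \<longrightarrow> c = 0) \<and>
             (I2 \<noteq> {} \<and> K \<noteq> {} \<and> I2 \<inter> K = {} \<longrightarrow> c = monom 1 (m - 1) - monom 1 m) \<and>
             (I2 = {} \<and> K = {} \<longrightarrow> c = - monom 1 (m - 1))" using P by blast

  have cnz: "c \<noteq> 0" using nz by (simp add: c_def)
  have Minle: "\<And>j. j < r \<Longrightarrow> Min (\<nu> ` {..<r}) \<le> \<nu> j" by (intro Min_le) auto
  have Maxge: "\<And>j. j < r \<Longrightarrow> \<nu> j \<le> Max (\<nu> ` {..<r})" by (intro Max_ge) auto
  show ?thesis
  proof (cases "I1 = {..<r}")
    case False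
    have K0: "K = {}" using Q1[OF False] cnz by blast
    have "\<not> (\<forall>j<r. 1 \<le> n j)" using False by (auto simp: I1_def)
    then obtain j where j: "j < r" "n j = 0" by auto
    show ?thesis
    proof (cases "n i = 0")
      case False
      hence "i \<in> I1" using ir by (auto simp: I1_def)
      hence "n i + \<nu> i \<le> m" using K0 by (auto simp: K_def)
      thus ?thesis using mle[OF j(1)] j(2) Minle[OF ir] Maxge[OF j(1)] by arith
    qed simp
  next
    case True
    show ?thesis
    proof (cases "n i \<le> 1")
      case False
      hence iI2: "i \<in> I2" using ir by (auto simp: I2_def)
      hence "I2 \<inter> K = {}" "K \<noteq> {}" using Q2[OF True] cnz by auto
      then obtain k where k: "k \<in> K" "i \<notin> K" using iI2 by auto
      have kr: "k < r" "n k = 1" using k(1) \<open>I2 \<inter> K = {}\<close> by (auto simp: K_def I1_def I2_def)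
      have "n i + \<nu> i \<le> m" using k(2) iI2 by (auto simp: K_def I1_def I2_def)
      thus ?thesis using mle[OF kr(1)] kr(2) Minle[OF ir] Maxge[OF kr(1)] by arith
    qed simp
  qed
qed

lemma zero_case:
  fixes n :: "nat \<Rightarrow> nat"
  assumes r1: "1 \<le> r" and nv: "n \<in> vecs r"
  shows "Ftilde r (\<lambda>_. 0) n = (if n = (\<lambda>_. 0) then 1 else if n = onesvec r then -1 else 0)"
proof -
  define \<nu> :: "nat \<Rightarrow> nat" where "\<nu> = (\<lambda>_. 0)"
  define m where "m \<equiv> Min ((\<lambda>i. n i + \<nu> i) ` {..<r})"
  define I1 where "I1 \<equiv> {i. i < r \<and> n i \<ge> 1}"
  define I2 where "I2 \<equiv> {i. i < r \<and> n i \<ge> 2}"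
  define K where "K \<equiv> {i \<in> I1. n i + \<nu> i \<ge> m + 1}"
  define c where "c \<equiv> Ftilde r \<nu> n"
  note P = part1[OF r1 nv, where \<nu>=\<nu>, folded m_def c_def, folded I1_def I2_def, folded K_def]
  have mle: "\<And>j. j < r \<Longrightarrow> m \<le> n j + \<nu> j" unfolding m_def by (intro Min_le) auto
  have min_in: "m \<in> (\<lambda>i. n i + \<nu> i) ` {..<r}" unfolding m_def using r1 by (intro Min_in) (auto simp: lessThan_empty_iff)
  have Q1: "I1 \<noteq> {..<r} \<Longrightarrow> (I1 = {} \<longrightarrow> c = monom 1 m) \<and>
             (I1 \<noteq> {} \<and> K = {} \<longrightarrow> c = monom 1 m - monom 1 (m - 1)) \<and>
             (K \<noteq> {} \<longrightarrow> c = 0)" using P by blast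
  have Q2: "I1 = {..<r} \<Longrightarrow> (I2 \<inter> K \<noteq> {} \<longrightarrow> c = 0) \<and>
             (I2 = {} \<and> K \<noteq> {} \<longrightarrow> c = - monom 1 m) \<and>
             (I2 \<noteq> {} \<and> K = {} \<longrightarrow> c = 0) \<and>
             (I2 \<noteq> {} \<and> K \<noteq> {} \<and> I2 \<inter> K = {} \<longrightarrow> c = monom 1 (m - 1) - monom 1 m) \<and>
             (I2 = {} \<and> K = {} \<longrightarrow> c = - monom 1 (m - 1))" using P by blast

  have r0: "0 \<in> {..<r}" using r1 by simp
  have nz: "n = (\<lambda>_. 0) \<longleftrightarrow> I1 = {}"
  proof
    assume "I1 = {}"
    hence "\<forall>x<r. n x = 0" by (auto simp: I1_def)
    thus "n = (\<lambda>_. 0)" using nv by (auto simp: vecs_def fun_eq_iff) (metis not_le)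
  qed (auto simp: I1_def)
  have no: "n = onesvec r \<longleftrightarrow> I1 = {..<r} \<and> I2 = {}"
  proof
    assume a: "I1 = {..<r} \<and> I2 = {}"
    have "\<And>x. x < r \<Longrightarrow> n x = 1"
    proof -
      fix x assume "x < r"
      hence "x \<in> I1" "x \<notin> I2" using a by auto
      thus "n x = 1" by (auto simp: I1_def I2_def)
    qed
    thus "n = onesvec r" using nv by (auto simp: vecs_def fun_eq_iff onesvec_def)
  qed (auto simp: I1_def I2_def onesvec_def)
  have Fc: "Ftilde r (\<lambda>_. 0) n = c" by (simp add: c_def \<nu>_def)
  show ?thesis unfolding Fc[symmetric]
  proof (cases "I1 = {..<r}")
    case False
    hence "\<not> (\<forall>j<r. 1 \<le> n j)" by (auto simp: I1_def)
    then obtain j where j: "j < r" "n j = 0" by auto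
    hence m0: "m = 0" using mle[OF j(1)] by (simp add: \<nu>_def)
    have non: "n \<noteq> onesvec r" using no False by blast
    show ?thesis
    proof (cases "I1 = {}")
      case True
      hence "c = 1" using Q1[OF False] m0 by simp
      thus ?thesis using True nz Fc by simp
    next
      case I1ne: False
      have "K = I1" using m0 by (auto simp: K_def \<nu>_def I1_def)
      hence "c = 0" using Q1[OF False] I1ne by simp
      moreover have "n \<noteq> (\<lambda>_. 0)" using nz I1ne by blast
      ultimately show ?thesis using non Fc by simp
    qed
  next
    case True
    have I1ne: "I1 \<noteq> {}" using True r0 by blast
    hence n0: "n \<noteq> (\<lambda>_. 0)" using nz by blast
    from min_in obtain i where i: "i < r" "m = n i + \<nu> i" by auto
    have "i \<in> I1" using True i(1) by simp
    hence m1: "1 \<le> m" using i(2) by (simp add: I1_def \<nu>_def)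
    show ?thesis
    proof (cases "I2 = {}")
      case True
      have "0 \<in> I1" "0 \<notin> I2" using \<open>I1 = {..<r}\<close> True r0 by auto
      hence "n 0 = 1" by (simp add: I1_def I2_def)
      hence "m = 1" using mle[of 0] m1 r1 by (simp add: \<nu>_def)
      have "K = {}"
      proof (rule ccontr)
        assume "K \<noteq> {}"
        then obtain k where "k \<in> K" by auto
        hence "k \<in> I2" using \<open>m = 1\<close> by (simp add: K_def I1_def I2_def \<nu>_def)
        thus False using True by simp
      qed
      hence "c = -1" using Q2[OF \<open>I1 = {..<r}\<close>] True \<open>m = 1\<close> by simp
      moreover have "n = onesvec r" using no True \<open>I1 = {..<r}\<close> by blast
      ultimately show ?thesis using n0 Fc by simp
    next
      case I2ne: False
      have "K \<subseteq> I2"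
      proof
        fix k assume "k \<in> K"
        thus "k \<in> I2" using m1 by (simp add: K_def I1_def I2_def \<nu>_def)
      qed
      hence "c = 0" using Q2[OF True] I2ne by (cases "K = {}") auto
      moreover have "n \<noteq> onesvec r" using no I2ne by blast
      ultimately show ?thesis using n0 Fc by simp
    qed
  qed
qed



lemma card_box:
  "finite {n\<in>vecs r. \<forall>i<r. n i \<le> b} \<and> card {n\<in>vecs r. \<forall>i<r. n i \<le> b} \<le> (b+1)^r"
proof -
  let ?g = "\<lambda>f i. if i<r then f i else (0::nat)"
  have sub: "{n\<in>vecs r. \<forall>i<r. n i \<le> b} \<subseteq> ?g ` PiE {..<r} (\<lambda>_. {..b})"
  proof
    fix k assume k: "k \<in> {n\<in>vecs r. \<forall>i<r. n i \<le> b}"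
    have "k = ?g (restrict k {..<r})"
      using k by (auto simp: vecs_def fun_eq_iff)
    moreover have "restrict k {..<r} \<in> PiE {..<r} (\<lambda>_. {..b})" using k by auto
    ultimately show "k \<in> ?g ` PiE {..<r} (\<lambda>_. {..b})" by blast
  qed
  have fin: "finite (PiE {..<r} (\<lambda>_. {..b}))" by (intro finite_PiE) auto
  have "card (?g ` PiE {..<r} (\<lambda>_. {..b})) \<le> card (PiE {..<r} (\<lambda>_. {..b}))" using fin by (rule card_image_le)
  also have "\<dots> = (b+1)^r" by (simp add: card_PiE)
  finally show ?thesis using sub fin by (meson card_mono finite_imageI finite_subset le_trans)
qed

lemma term_bound:
  fixes \<nu> n :: "nat \<Rightarrow> nat"
  assumes r1: "1 \<le> r" and nv: "n \<in> vecs r" and rho: "(\<rho>::real) \<ge> 1"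
    and eta: "\<forall>i<r. cmod (\<eta> i) = 1"
  shows "cmod (poly (map_poly of_int (Ftilde r \<nu> n)) (complex_of_real \<rho>) * (\<Prod>i<r. (\<eta> i / complex_of_real \<rho>) ^ n i))
     \<le> \<rho> ^ Min (\<nu> ` {..<r})"
proof -
  define m where "m = Min ((\<lambda>i. n i + \<nu> i) ` {..<r})"
  define \<mu> where "\<mu> = Min (\<nu> ` {..<r})"
  define s where "s = (\<Sum>i<r. n i)"
  have cb: "cmod (poly (map_poly of_int (Ftilde r \<nu> n)) (complex_of_real \<rho>)) \<le> \<rho> ^ m"
    using coef_set_bound[OF coef_in_set[OF r1 nv] rho] by (simp add: m_def)
  have "\<mu> \<in> \<nu> ` {..<r}" unfolding \<mu>_def using r1 by (intro Min_in) (auto simp: lessThan_empty_iff)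
  then obtain i0 where i0: "i0 < r" "\<nu> i0 = \<mu>" by auto
  have "m \<le> n i0 + \<nu> i0" unfolding m_def using i0 by (intro Min_le) auto
  moreover have "n i0 \<le> s" unfolding s_def using i0 by (intro member_le_sum) auto
  ultimately have ms: "m \<le> \<mu> + s" using i0 by simp
  have np: "cmod (\<Prod>i<r. (\<eta> i / complex_of_real \<rho>) ^ n i) = (1/\<rho>) ^ s"
  proof -
    have "cmod (\<Prod>i<r. (\<eta> i / complex_of_real \<rho>) ^ n i) = (\<Prod>i<r. cmod ((\<eta> i / complex_of_real \<rho>) ^ n i))"
      by (simp add: prod_norm)
    also have "\<dots> = (\<Prod>i<r. (1/\<rho>) ^ n i)"
      using eta rho by (intro prod.cong) (auto simp: norm_power norm_divide)
    also have "\<dots> = (1/\<rho>) ^ s" by (simp add: s_def power_sum)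
    finally show ?thesis .
  qed
  have "cmod (poly (map_poly of_int (Ftilde r \<nu> n)) (complex_of_real \<rho>) * (\<Prod>i<r. (\<eta> i / complex_of_real \<rho>) ^ n i))
      \<le> \<rho> ^ m * (1/\<rho>) ^ s" unfolding norm_mult np using cb rho by (intro mult_right_mono) auto
  also have "\<dots> \<le> \<rho> ^ (\<mu> + s) * (1/\<rho>) ^ s" using rho ms by (intro mult_right_mono power_increasing) auto
  also have "\<dots> = \<rho> ^ \<mu>" using rho by (simp add: power_add power_one_over field_simps)
  finally show ?thesis by (simp add: \<mu>_def)
qed



theorem proposition3p2:
  fixes r :: nat
  assumes "r \<ge> 1"
  shows
  "(\<forall>\<nu> n. n \<in> vecs r \<longrightarrow>
      (let m = Min ((\<lambda>i. n i + \<nu> i) ` {..<r});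
           I1 = {i. i < r \<and> n i \<ge> 1};
           I2 = {i. i < r \<and> n i \<ge> 2};
           K = {i \<in> I1. n i + \<nu> i \<ge> m + 1};
           c = Ftilde r \<nu> n
       in (I1 \<noteq> {..<r} \<longrightarrow>
             (I1 = {} \<longrightarrow> c = monom 1 m) \<and>
             (I1 \<noteq> {} \<and> K = {} \<longrightarrow> c = monom 1 m - monom 1 (m - 1)) \<and>
             (K \<noteq> {} \<longrightarrow> c = 0)) \<and>
          (I1 = {..<r} \<longrightarrow>
             (I2 \<inter> K \<noteq> {} \<longrightarrow> c = 0) \<and>
             (I2 = {} \<and> K \<noteq> {} \<longrightarrow> c = - monom 1 m) \<and>
             (I2 \<noteq> {} \<and> K = {} \<longrightarrow> c = 0) \<and>
             (I2 \<noteq> {} \<and> K \<noteq> {} \<and> I2 \<inter> K = {} \<longrightarrow> c = monom 1 (m - 1) - monom 1 m) \<and>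
             (I2 = {} \<and> K = {} \<longrightarrow> c = - monom 1 (m - 1)))))
   \<and> (\<forall>n\<in>vecs r. Ftilde r (\<lambda>_. 0) n =
        (if n = (\<lambda>_. 0) then 1 else if n = onesvec r then -1 else 0))
   \<and> (\<forall>\<nu>. finite {n \<in> vecs r. Ftilde r \<nu> n \<noteq> 0} \<and>
        (\<forall>n\<in>vecs r. Ftilde r \<nu> n \<noteq> 0 \<longrightarrow>
           (\<forall>i<r. n i \<le> Max (\<nu> ` {..<r}) + 1)))
   \<and> (\<forall>(\<rho>::real) (\<epsilon>::real) (\<eta>::nat \<Rightarrow> complex) \<nu>.
        \<rho> \<ge> 1 \<longrightarrow> \<epsilon> > 0 \<longrightarrow> (\<forall>i<r. cmod (\<eta> i) = 1) \<longrightarrow>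
        cmod (Ftilde_eval r \<nu> \<rho> (\<lambda>i. \<eta> i / complex_of_real \<rho>))
          \<le> (2 + real (Max (\<nu> ` {..<r})) - real (Min (\<nu> ` {..<r}))) ^ r
             * \<rho> ^ Min (\<nu> ` {..<r}))"
proof -
  have r1: "1 \<le> r" using assms .
  have P1: "\<forall>\<nu> n. n \<in> vecs r \<longrightarrow>
      (let m = Min ((\<lambda>i. n i + \<nu> i) ` {..<r});
           I1 = {i. i < r \<and> n i \<ge> 1};
           I2 = {i. i < r \<and> n i \<ge> 2};
           K = {i \<in> I1. n i + \<nu> i \<ge> m + 1};
           c = Ftilde r \<nu> n
       in (I1 \<noteq> {..<r} \<longrightarrow>
             (I1 = {} \<longrightarrow> c = monom 1 m) \<and>
             (I1 \<noteq> {} \<and> K = {} \<longrightarrow> c = monom 1 m - monom 1 (m - 1)) \<and>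
             (K \<noteq> {} \<longrightarrow> c = 0)) \<and>
          (I1 = {..<r} \<longrightarrow>
             (I2 \<inter> K \<noteq> {} \<longrightarrow> c = 0) \<and>
             (I2 = {} \<and> K \<noteq> {} \<longrightarrow> c = - monom 1 m) \<and>
             (I2 \<noteq> {} \<and> K = {} \<longrightarrow> c = 0) \<and>
             (I2 \<noteq> {} \<and> K \<noteq> {} \<and> I2 \<inter> K = {} \<longrightarrow> c = monom 1 (m - 1) - monom 1 m) \<and>
             (I2 = {} \<and> K = {} \<longrightarrow> c = - monom 1 (m - 1))))"
  proof (intro allI impI)
    fix \<nu> n :: "nat \<Rightarrow> nat" assume nv: "n \<in> vecs r"
    show "let m = Min ((\<lambda>i. n i + \<nu> i) ` {..<r});
           I1 = {i. i < r \<and> n i \<ge> 1};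
           I2 = {i. i < r \<and> n i \<ge> 2};
           K = {i \<in> I1. n i + \<nu> i \<ge> m + 1};
           c = Ftilde r \<nu> n
       in (I1 \<noteq> {..<r} \<longrightarrow>
             (I1 = {} \<longrightarrow> c = monom 1 m) \<and>
             (I1 \<noteq> {} \<and> K = {} \<longrightarrow> c = monom 1 m - monom 1 (m - 1)) \<and>
             (K \<noteq> {} \<longrightarrow> c = 0)) \<and>
          (I1 = {..<r} \<longrightarrow>
             (I2 \<inter> K \<noteq> {} \<longrightarrow> c = 0) \<and>
             (I2 = {} \<and> K \<noteq> {} \<longrightarrow> c = - monom 1 m) \<and>
             (I2 \<noteq> {} \<and> K = {} \<longrightarrow> c = 0) \<and>
             (I2 \<noteq> {} \<and> K \<noteq> {} \<and> I2 \<inter> K = {} \<longrightarrow> c = monom 1 (m - 1) - monom 1 m) \<and>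
             (I2 = {} \<and> K = {} \<longrightarrow> c = - monom 1 (m - 1)))"
      unfolding Let_def by (rule part1[OF r1 nv])
  qed
  have P2: "\<forall>n\<in>vecs r. Ftilde r (\<lambda>_. 0) n =
        (if n = (\<lambda>_. 0) then 1 else if n = onesvec r then -1 else 0)"
    using zero_case[OF r1] by blast
  have MinMax: "\<And>\<nu>::nat\<Rightarrow>nat. Min (\<nu> ` {..<r}) \<le> Max (\<nu> ` {..<r})"
  proof -
    fix \<nu> :: "nat \<Rightarrow> nat"
    have "Min (\<nu> ` {..<r}) \<le> \<nu> 0" using r1 by (intro Min_le) auto
    also have "\<dots> \<le> Max (\<nu> ` {..<r})" using r1 by (intro Max_ge) auto
    finally show "Min (\<nu> ` {..<r}) \<le> Max (\<nu> ` {..<r})" .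
  qed
  have sub: "\<And>\<nu>. {n \<in> vecs r. Ftilde r \<nu> n \<noteq> 0} \<subseteq>
      {n\<in>vecs r. \<forall>i<r. n i \<le> Max (\<nu> ` {..<r}) - Min (\<nu> ` {..<r}) + 1}"
    using box[OF r1] by blast
  have finS: "\<And>\<nu>. finite {n \<in> vecs r. Ftilde r \<nu> n \<noteq> 0}"
    using sub card_box by (meson finite_subset)
  have cardS: "\<And>\<nu>. card {n \<in> vecs r. Ftilde r \<nu> n \<noteq> 0} \<le> (Max (\<nu> ` {..<r}) - Min (\<nu> ` {..<r}) + 2) ^ r"
  proof -
    fix \<nu> :: "nat \<Rightarrow> nat"
    have "card {n \<in> vecs r. Ftilde r \<nu> n \<noteq> 0} \<le> card {n\<in>vecs r. \<forall>i<r. n i \<le> Max (\<nu> ` {..<r}) - Min (\<nu> ` {..<r}) + 1}"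
      using sub card_box by (intro card_mono) auto
    also have "\<dots> \<le> (Max (\<nu> ` {..<r}) - Min (\<nu> ` {..<r}) + 1 + 1) ^ r" using card_box by blast
    finally show "card {n \<in> vecs r. Ftilde r \<nu> n \<noteq> 0} \<le> (Max (\<nu> ` {..<r}) - Min (\<nu> ` {..<r}) + 2) ^ r"
      by (simp add: add.assoc)
  qed
  have P3: "\<forall>\<nu>. finite {n \<in> vecs r. Ftilde r \<nu> n \<noteq> 0} \<and>
        (\<forall>n\<in>vecs r. Ftilde r \<nu> n \<noteq> 0 \<longrightarrow>
           (\<forall>i<r. n i \<le> Max (\<nu> ` {..<r}) + 1))"
  proof (intro allI conjI ballI impI)
    fix \<nu> :: "nat \<Rightarrow> nat" and n i assume "n \<in> vecs r" "Ftilde r \<nu> n \<noteq> 0" "i < r"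
    thus "n i \<le> Max (\<nu> ` {..<r}) + 1" using box[OF r1] by fastforce
  qed (rule finS)
  have P4: "\<forall>(\<rho>::real) (\<epsilon>::real) (\<eta>::nat \<Rightarrow> complex) \<nu>.
        \<rho> \<ge> 1 \<longrightarrow> \<epsilon> > 0 \<longrightarrow> (\<forall>i<r. cmod (\<eta> i) = 1) \<longrightarrow>
        cmod (Ftilde_eval r \<nu> \<rho> (\<lambda>i. \<eta> i / complex_of_real \<rho>))
          \<le> (2 + real (Max (\<nu> ` {..<r})) - real (Min (\<nu> ` {..<r}))) ^ r
             * \<rho> ^ Min (\<nu> ` {..<r})"
  proof (intro allI impI)
    fix \<rho> \<epsilon> :: real and \<eta> :: "nat \<Rightarrow> complex" and \<nu> :: "nat \<Rightarrow> nat"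
    assume rho: "\<rho> \<ge> 1" and "\<epsilon> > 0" and eta: "\<forall>i<r. cmod (\<eta> i) = 1"
    let ?S = "{n \<in> vecs r. Ftilde r \<nu> n \<noteq> 0}"
    let ?M = "Max (\<nu> ` {..<r})" and ?m = "Min (\<nu> ` {..<r})"
    have "cmod (Ftilde_eval r \<nu> \<rho> (\<lambda>i. \<eta> i / complex_of_real \<rho>))
       \<le> (\<Sum>n\<in>?S. cmod (poly (map_poly of_int (Ftilde r \<nu> n)) (complex_of_real \<rho>) * (\<Prod>i<r. (\<eta> i / complex_of_real \<rho>) ^ n i)))"
      unfolding Ftilde_eval_def by (rule norm_sum)
    also have "\<dots> \<le> (\<Sum>n\<in>?S. \<rho> ^ ?m)"
      by (intro sum_mono term_bound[OF r1 _ rho eta]) auto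
    also have "\<dots> = real (card ?S) * \<rho> ^ ?m" by simp
    also have "\<dots> \<le> real ((?M - ?m + 2) ^ r) * \<rho> ^ ?m"
    proof (rule mult_right_mono)
      show "real (card ?S) \<le> real ((?M - ?m + 2) ^ r)" using cardS[of \<nu>] by (simp only: of_nat_le_iff)
    qed (use rho in auto)
    also have "real ((?M - ?m + 2) ^ r) = (2 + real ?M - real ?m) ^ r"
      using MinMax[of \<nu>] by (simp add: of_nat_diff algebra_simps)
    finally show "cmod (Ftilde_eval r \<nu> \<rho> (\<lambda>i. \<eta> i / complex_of_real \<rho>))
          \<le> (2 + real ?M - real ?m) ^ r * \<rho> ^ ?m" .
  qed
  show ?thesis using P1 P2 P3 P4 by blast
qed


end
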